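(* Assume Model M with $p=0$ or $p\in[1/3,1)$. Fix $t$, let $I_i^{(n)}=\mathbf{1}\{s_i^*>x_n(t)\}$, $\pi_i^{(n)}=P(I_i^{(n)}=1)$, $W_n=\sum_{i=1}^n I_i^{(n)}$ and $\lambda_n=E(W_n)=\sum_i\pi_i^{(n)}$. Then $$d_{TV}\left(\mathcal{L}(W_n),\mathrm{Poi}(\lambda_n)\right)\le\frac{1-e^{-\lambda_n}}{\lambda_n}\left(\lambda_n-\mathrm{Var}(W_n)\right)=\frac{1-e^{-\lambda_n}}{\lambda_n}\left(\sum_{i=1}^n\left(\pi_i^{(n)}\right)^2-\sum_{i\neq j}\mathrm{Cov}\left(I_i^{(n)},I_j^{(n)}\right)\right),$$ where $d_{TV}$ is the total variation distance and $\mathrm{Poi}(\lambda_n)$ the Poisson distribution with mean $\lambda_n$.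
   Context: Model M (round-robin tournament with $n$ players): for each ordered pair $i\neq j$ in $\{1,\dots,n\}$, $X_{ij}\in\{0,1/2,1\}$ is the score of player $i$ in the game against player $j$, with $X_{ij}+X_{ji}=1$; $P(X_{ij}=1/2)=p$ for all games and $P(X_{ij}=1)=P(X_{ji}=1)=(1-p)/2$; the $\binom{n}{2}$ pairs $(X_{ij},X_{ji})$, $i<j$, are mutually independent. The score of player $i$ is $s_i=\sum_{j\neq i}X_{ij}$; $s_i^*=(s_i-(n-1)/2)/\sqrt{(n-1)(1-p)/4}$. Set $a_n=(2\log n)^{-1/2}$, $b_n=(2\log n)^{1/2}-\tfrac12(2\log n)^{-1/2}(\log\log n+\log 4\pi)$, $x_n(t)=a_nt+b_n$. *)

theory Defs
  imports "HOL-Probability.Probability"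
begin

text \<open>A single game of Model M: score of the lower-indexed player.
  Draw (score 1/2) with probability p, otherwise win/loss with probability (1-p)/2 each.\<close>
definition game_pmf :: "real \<Rightarrow> real pmf" where
  "game_pmf p = bind_pmf (bernoulli_pmf p)
     (\<lambda>d. if d then return_pmf (1/2)
          else map_pmf (\<lambda>b. if b then 1 else 0) (bernoulli_pmf (1/2)))"

text \<open>Players are 0,...,n-1. An outcome assigns to every pair (i,j) with i<j<n the
  score X_ij of player i against j; the games are independent.\<close>
definition tournament_pmf :: "nat \<Rightarrow> real \<Rightarrow> (nat \<times> nat \<Rightarrow> real) pmf" where
  "tournament_pmf n p = Pi_pmf {(i, j). i < j \<and> j < n} (1/2) (\<lambda>_. game_pmf p)"

definition X :: "(nat \<times> nat \<Rightarrow> real) \<Rightarrow> nat \<Rightarrow> nat \<Rightarrow> real" where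
  "X \<omega> i j = (if i < j then \<omega> (i, j) else 1 - \<omega> (j, i))"

definition score :: "nat \<Rightarrow> (nat \<times> nat \<Rightarrow> real) \<Rightarrow> nat \<Rightarrow> real" where
  "score n \<omega> i = (\<Sum>j\<in>{..<n} - {i}. X \<omega> i j)"

definition sstar :: "nat \<Rightarrow> real \<Rightarrow> (nat \<times> nat \<Rightarrow> real) \<Rightarrow> nat \<Rightarrow> real" where
  "sstar n p \<omega> i = (score n \<omega> i - (real n - 1) / 2) / sqrt ((real n - 1) * (1 - p) / 4)"

definition a_n :: "nat \<Rightarrow> real" where
  "a_n n = (2 * ln (real n)) powr (-1/2)"

definition b_n :: "nat \<Rightarrow> real" where
  "b_n n = (2 * ln (real n)) powr (1/2)
     - 1/2 * (2 * ln (real n)) powr (-1/2) * (ln (ln (real n)) + ln (4 * pi))"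

definition x_n :: "nat \<Rightarrow> real \<Rightarrow> real" where
  "x_n n t = a_n n * t + b_n n"

definition Ind :: "nat \<Rightarrow> real \<Rightarrow> real \<Rightarrow> (nat \<times> nat \<Rightarrow> real) \<Rightarrow> nat \<Rightarrow> real" where
  "Ind n p t \<omega> i = (if sstar n p \<omega> i > x_n n t then 1 else 0)"

definition W :: "nat \<Rightarrow> real \<Rightarrow> real \<Rightarrow> (nat \<times> nat \<Rightarrow> real) \<Rightarrow> nat" where
  "W n p t \<omega> = card {i. i < n \<and> sstar n p \<omega> i > x_n n t}"

text \<open>Poisson probability mass function with mean lam (lam = 0 gives the point mass at 0).\<close>
definition poisson_mass :: "real \<Rightarrow> nat \<Rightarrow> real" where
  "poisson_mass lam k = lam ^ k / fact k * exp (- lam)"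

text \<open>Total variation distance between a distribution on nat and a probability mass
  function on nat: half the l1 distance, i.e. sup over A of |P(A) - Q(A)|.\<close>
definition dTV_nat :: "nat pmf \<Rightarrow> (nat \<Rightarrow> real) \<Rightarrow> real" where
  "dTV_nat P q = (1/2) * (\<Sum>k. \<bar>pmf P k - q k\<bar>)"

end

theory Submission
  imports Defs
begin


lemma poi_nonneg: "l \<ge> 0 \<Longrightarrow> poisson_mass l k \<ge> 0"
  by (simp add: poisson_mass_def)

lemma poi_Suc': "real (Suc r) * poisson_mass l (Suc r) = l * poisson_mass l r"
proof -
  have f: "fact (Suc r) = real (Suc r) * fact r" by simp
  have "real (Suc r) * poisson_mass l (Suc r) = real (Suc r) * (l * l ^ r / (real (Suc r) * fact r) * exp (- l))"
    unfolding poisson_mass_def f by simp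
  also have "\<dots> = (real (Suc r) * (l * l ^ r)) / (real (Suc r) * fact r) * exp (- l)"
    by simp
  also have "\<dots> = l * (l ^ r / fact r * exp (- l))"
    by (subst nonzero_mult_divide_mult_cancel_left) auto
  finally show ?thesis by (simp add: poisson_mass_def)
qed

lemma poi_sums: "poisson_mass l sums 1"
proof -
  have "(\<lambda>k. l ^ k /\<^sub>R fact k) sums exp l" by (rule exp_converges)
  hence "(\<lambda>k. (l ^ k /\<^sub>R fact k) * exp (-l)) sums (exp l * exp (-l))" by (rule sums_mult2)
  moreover have "(\<lambda>k. (l ^ k /\<^sub>R fact k) * exp (-l)) = poisson_mass l"
    by (auto simp: poisson_mass_def fun_eq_iff divide_inverse mult.commute)
  ultimately show ?thesis by (simp add: exp_minus)
qed

lemma poi_mean_sums: "(\<lambda>k. real k * poisson_mass l k) sums l"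
proof -
  have "(\<lambda>k. l * poisson_mass l k) sums (l * 1)" by (rule sums_mult[OF poi_sums])
  hence "(\<lambda>i. real (i+1) * poisson_mass l (i+1)) sums l"
    using poi_Suc' by simp
  thus ?thesis by (subst (asm) sums_iff_shift) simp
qed

definition Fp :: "real \<Rightarrow> nat \<Rightarrow> real" where "Fp l k = (\<Sum>r<k. poisson_mass l r)"

lemma l_Fp: "l * Fp l k = (\<Sum>r<k. real (Suc r) * poisson_mass l (Suc r))"
  unfolding Fp_def sum_distrib_left by (intro sum.cong refl) (metis poi_Suc')

lemma Fp_Suc_shift: "Fp l (Suc k) = poisson_mass l 0 + (\<Sum>r<k. poisson_mass l (Suc r))"
  unfolding Fp_def by (rule sum.lessThan_Suc_shift)

lemma tail_ineq:
  assumes "l \<ge> 0"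
  shows "(\<Sum>s<Suc k. (real s - real k) * poisson_mass l s) \<le> l - real k"
proof -
  define f where "f = (\<lambda>s. (real s - real k) * poisson_mass l s)"
  have "(\<lambda>s. real s * poisson_mass l s - real k * poisson_mass l s) sums (l - real k * 1)"
    by (intro sums_diff poi_mean_sums sums_mult poi_sums)
  moreover have "(\<lambda>s. real s * poisson_mass l s - real k * poisson_mass l s) = f"
    unfolding f_def by (rule ext) (simp add: left_diff_distrib)
  ultimately have s: "f sums (l - real k)" by simp
  hence sm: "summable f" by (simp add: sums_iff)
  have split: "suminf f = (\<Sum>s. f (s + Suc k)) + (\<Sum>s<Suc k. f s)"
    by (rule suminf_split_initial_segment[OF sm])
  have sm2: "summable (\<lambda>s. f (s + Suc k))"
    using sm by (subst summable_iff_shift)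
  have nn: "\<And>s. 0 \<le> f (s + Suc k)"
    unfolding f_def using assms by (intro mult_nonneg_nonneg poi_nonneg) auto
  have "(\<Sum>s. f (s + Suc k)) \<ge> 0"
    by (rule suminf_nonneg[OF sm2 nn])
  moreover have "suminf f = l - real k" using s by (simp add: sums_iff)
  ultimately have "(\<Sum>s<Suc k. f s) \<le> l - real k" using split by linarith
  thus ?thesis unfolding f_def .
qed

definition gj :: "real \<Rightarrow> nat \<Rightarrow> nat \<Rightarrow> real" where
  "gj l j k = fact (k - 1) * exp l / l ^ k * (poisson_mass l j * ((if j < k then 1 else 0) - Fp l k))"

lemma fact_pm: "l > 0 \<Longrightarrow> fact k * exp l / l ^ k * poisson_mass l k = 1"
  by (simp add: poisson_mass_def field_simps exp_minus)

lemma gj_stein: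
  assumes "l > 0"
  shows "l * gj l j (Suc k) - real k * gj l j k = (if k = j then 1 else 0) - poisson_mass l j"
proof -
  define B where "B = fact k * exp l / l ^ k"
  have c: "l * (fact k * exp l / l ^ Suc k) = B" unfolding B_def using assms by (simp add: field_simps)
  have e1: "l * gj l j (Suc k) = B * (poisson_mass l j * ((if j < Suc k then 1 else 0) - Fp l (Suc k)))"
    unfolding gj_def c[symmetric] by simp
  have e2: "real k * gj l j k = B * (poisson_mass l j * ((if j < k then 1 else 0) - Fp l k))"
  proof (cases k)
    case 0 thus ?thesis by (simp add: Fp_def)
  next
    case (Suc m) thus ?thesis by (simp add: gj_def B_def)
  qed
  have F: "Fp l (Suc k) = Fp l k + poisson_mass l k" by (simp add: Fp_def)
  have "l * gj l j (Suc k) - real k * gj l j k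
     = B * (poisson_mass l j * (((if j < Suc k then 1 else 0) - (if j < k then 1 else 0)) - poisson_mass l k))"
    unfolding e1 e2 F by (simp add: algebra_simps)
  also have "\<dots> = (if k = j then 1 else 0) - poisson_mass l j"
  proof (cases "k = j")
    case True
    have "B * poisson_mass l k = 1" unfolding B_def by (rule fact_pm[OF assms])
    thus ?thesis using True by (simp add: algebra_simps)
  next
    case False
    hence "(if j < Suc k then 1 else 0) - (if j < k then 1 else 0) = (0::real)" by auto
    moreover have "B * poisson_mass l k = 1" unfolding B_def by (rule fact_pm[OF assms])
    ultimately show ?thesis using False by (simp add: algebra_simps)
  qed
  finally show ?thesis .
qed

definition ak :: "real \<Rightarrow> nat \<Rightarrow> real" where "ak l k = fact (k - 1) * exp l / l ^ k"

lemma gj_ak: "gj l j k = ak l k * (poisson_mass l j * ((if j < k then 1 else 0) - Fp l k))"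
  by (simp add: gj_def ak_def)

lemma ak_pos: "l > 0 \<Longrightarrow> ak l k > 0"
  by (simp add: ak_def)

lemma ak_Suc: assumes "l > 0" "k \<ge> 1" shows "ak l (Suc k) = ak l k * real k / l"
proof -
  obtain m where m: "k = Suc m" using assms(2) by (cases k) auto
  have "fact (Suc (Suc m)) = real (Suc (Suc m)) * (fact (Suc m) :: real)" by simp
  thus ?thesis unfolding ak_def m using assms(1) by (simp add: field_simps)
qed

lemma ak_poi: assumes "l > 0" "k \<ge> 1" shows "ak l k * poisson_mass l k = 1 / real k"
proof -
  obtain m where m: "k = Suc m" using assms(2) by (cases k) auto
  have "fact k * exp l / l ^ k * poisson_mass l k = 1" by (rule fact_pm[OF assms(1)])
  moreover have "fact k * exp l / l ^ k = real k * ak l k" unfolding ak_def m by simp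
  ultimately have "real k * (ak l k * poisson_mass l k) = 1" by (simp add: mult.assoc)
  thus ?thesis using assms(2) by (simp add: field_simps)
qed

lemma KI1: assumes "l \<ge> 0" shows "l * Fp l k \<le> real k * (Fp l (Suc k) - poisson_mass l 0)"
proof -
  have "l * Fp l k = (\<Sum>r<k. real (Suc r) * poisson_mass l (Suc r))" by (rule l_Fp)
  also have "\<dots> \<le> (\<Sum>r<k. real k * poisson_mass l (Suc r))"
    using assms by (intro sum_mono mult_right_mono poi_nonneg) auto
  also have "\<dots> = real k * (Fp l (Suc k) - poisson_mass l 0)"
    by (simp add: Fp_Suc_shift sum_distrib_left)
  finally show ?thesis .
qed

lemma KI2: assumes "l \<ge> 0" shows "real k * (1 - Fp l (Suc k)) \<le> l * (1 - Fp l k)"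
proof -
  have "(\<Sum>s<Suc k. (real s - real k) * poisson_mass l s) \<le> l - real k" by (rule tail_ineq[OF assms])
  moreover have "(\<Sum>s<Suc k. (real s - real k) * poisson_mass l s)
      = (\<Sum>s<Suc k. real s * poisson_mass l s) - (\<Sum>s<Suc k. real k * poisson_mass l s)"
    by (simp add: left_diff_distrib sum_subtractf)
  moreover have "(\<Sum>s<Suc k. real k * poisson_mass l s) = real k * Fp l (Suc k)"
    unfolding Fp_def by (rule sum_distrib_left[symmetric])
  moreover have "(\<Sum>s<Suc k. real s * poisson_mass l s) = l * Fp l k"
    by (simp only: l_Fp sum.lessThan_Suc_shift)
  ultimately show ?thesis by (simp add: algebra_simps)
qed

lemma gj_dec_gt:
  assumes "l > 0" "k \<ge> 1" "k < j"
  shows "gj l j (Suc k) - gj l j k \<le> 0"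
proof -
  have "gj l j (Suc k) - gj l j k = ak l k * poisson_mass l j / l * (l * Fp l k - real k * Fp l (Suc k))"
    unfolding gj_ak ak_Suc[OF assms(1,2)] using assms by (simp add: field_simps)
  also have "\<dots> \<le> 0"
  proof (rule mult_nonneg_nonpos)
    show "0 \<le> ak l k * poisson_mass l j / l"
      using assms by (intro divide_nonneg_pos mult_nonneg_nonneg) (auto simp: less_imp_le ak_pos poi_nonneg)
    have "l * Fp l k \<le> real k * (Fp l (Suc k) - poisson_mass l 0)" using KI1 assms by simp
    moreover have "real k * poisson_mass l 0 \<ge> 0" using assms poi_nonneg[of l 0] by simp
    ultimately show "l * Fp l k - real k * Fp l (Suc k) \<le> 0" by (simp add: algebra_simps)
  qed
  finally show ?thesis .
qed

lemma gj_dec_lt: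
  assumes "l > 0" "k \<ge> 1" "j < k"
  shows "gj l j (Suc k) - gj l j k \<le> 0"
proof -
  have "gj l j (Suc k) - gj l j k = ak l k * poisson_mass l j / l * (real k * (1 - Fp l (Suc k)) - l * (1 - Fp l k))"
    unfolding gj_ak ak_Suc[OF assms(1,2)] using assms by (simp add: field_simps)
  also have "\<dots> \<le> 0"
  proof (rule mult_nonneg_nonpos)
    show "0 \<le> ak l k * poisson_mass l j / l"
      using assms by (intro divide_nonneg_pos mult_nonneg_nonneg) (auto simp: less_imp_le ak_pos poi_nonneg)
    show "real k * (1 - Fp l (Suc k)) - l * (1 - Fp l k) \<le> 0" using KI2[of l k] assms by simp
  qed
  finally show ?thesis .
qed

lemma gj_diag:
  assumes "l > 0" "k \<ge> 1"
  shows "gj l k (Suc k) - gj l k k \<le> (1 - exp (- l)) / l"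
proof -
  have p: "ak l k * poisson_mass l k = 1 / real k" by (rule ak_poi[OF assms])
  have "gj l k (Suc k) - gj l k k = (ak l k * poisson_mass l k) * (real k / l * (1 - Fp l (Suc k)) + Fp l k)"
    unfolding gj_ak ak_Suc[OF assms(1,2)] using assms by (simp add: field_simps)
  also have "\<dots> = (real k * (1 - Fp l (Suc k)) + l * Fp l k) / (real k * l)"
    unfolding p using assms by (simp add: field_simps)
  also have "\<dots> \<le> (real k * (1 - exp (-l))) / (real k * l)"
  proof (rule divide_right_mono)
    have "l * Fp l k \<le> real k * (Fp l (Suc k) - poisson_mass l 0)" using KI1 assms by simp
    moreover have "poisson_mass l 0 = exp (-l)" by (simp add: poisson_mass_def)
    ultimately show "real k * (1 - Fp l (Suc k)) + l * Fp l k \<le> real k * (1 - exp (- l))"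
      by (simp add: algebra_simps)
  qed (use assms in simp)
  also have "\<dots> = (1 - exp (- l)) / l" using assms by simp
  finally show ?thesis .
qed

definition gA :: "real \<Rightarrow> nat set \<Rightarrow> nat \<Rightarrow> real" where
  "gA l A k = (\<Sum>j\<in>A. gj l j k)"

lemma gA_stein:
  assumes "l > 0" "finite A"
  shows "l * gA l A (Suc k) - real k * gA l A k = (if k \<in> A then 1 else 0) - (\<Sum>j\<in>A. poisson_mass l j)"
proof -
  have "l * gA l A (Suc k) - real k * gA l A k = (\<Sum>j\<in>A. l * gj l j (Suc k) - real k * gj l j k)"
    unfolding gA_def by (simp add: sum_distrib_left sum_subtractf)
  also have "\<dots> = (\<Sum>j\<in>A. (if k = j then 1 else 0) - poisson_mass l j)"
    using gj_stein[OF assms(1)] by simp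
  also have "\<dots> = (if k \<in> A then 1 else 0) - (\<Sum>j\<in>A. poisson_mass l j)"
    using assms(2) by (simp add: sum_subtractf)
  finally show ?thesis .
qed

lemma gA_diff:
  assumes "l > 0" "finite A" "k \<ge> 1"
  shows "gA l A (Suc k) - gA l A k \<le> (1 - exp (- l)) / l"
proof -
  have c0: "0 \<le> (1 - exp (- l)) / l" using assms by simp
  have "gA l A (Suc k) - gA l A k = (\<Sum>j\<in>A. gj l j (Suc k) - gj l j k)"
    unfolding gA_def by (simp add: sum_subtractf)
  also have "\<dots> \<le> (\<Sum>j\<in>A. if j = k then (1 - exp (- l)) / l else 0)"
  proof (rule sum_mono)
    fix j assume "j \<in> A"
    show "gj l j (Suc k) - gj l j k \<le> (if j = k then (1 - exp (- l)) / l else 0)"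
      using gj_diag[OF assms(1,3)] gj_dec_gt[OF assms(1,3)] gj_dec_lt[OF assms(1,3)]
      by (cases "j = k"; cases "j < k") auto
  qed
  also have "\<dots> \<le> (1 - exp (- l)) / l"
    using assms(2) c0 by (simp add: sum.delta')
  finally show ?thesis .
qed



definition Ew :: "'a set \<Rightarrow> ('a \<Rightarrow> real) \<Rightarrow> ('a \<Rightarrow> real) \<Rightarrow> real" where
  "Ew \<Omega> w f = (\<Sum>\<omega>\<in>\<Omega>. w \<omega> * f \<omega>)"

lemma Ew_add: "Ew \<Omega> w (\<lambda>\<omega>. f \<omega> + g \<omega>) = Ew \<Omega> w f + Ew \<Omega> w g"
  unfolding Ew_def by (simp add: distrib_left sum.distrib)

lemma Ew_diff: "Ew \<Omega> w (\<lambda>\<omega>. f \<omega> - g \<omega>) = Ew \<Omega> w f - Ew \<Omega> w g"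
  unfolding Ew_def by (simp add: right_diff_distrib sum_subtractf)

lemma Ew_cmult: "Ew \<Omega> w (\<lambda>\<omega>. c * f \<omega>) = c * Ew \<Omega> w f"
  unfolding Ew_def by (simp add: sum_distrib_left algebra_simps)

lemma Ew_sum: "Ew \<Omega> w (\<lambda>\<omega>. \<Sum>i\<in>S. f i \<omega>) = (\<Sum>i\<in>S. Ew \<Omega> w (f i))"
  unfolding Ew_def by (simp add: sum_distrib_left sum.swap[of _ \<Omega>])

lemma Ew_cong: "(\<And>\<omega>. \<omega> \<in> \<Omega> \<Longrightarrow> f \<omega> = g \<omega>) \<Longrightarrow> Ew \<Omega> w f = Ew \<Omega> w g"
  unfolding Ew_def by (intro sum.cong) auto

lemma Ew_mono: "(\<And>\<omega>. \<omega> \<in> \<Omega> \<Longrightarrow> w \<omega> \<ge> 0) \<Longrightarrow> (\<And>\<omega>. \<omega> \<in> \<Omega> \<Longrightarrow> f \<omega> \<le> g \<omega>) \<Longrightarrow> Ew \<Omega> w f \<le> Ew \<Omega> w g"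
  unfolding Ew_def by (intro sum_mono mult_left_mono) auto

lemma Ew_nonneg: "(\<And>\<omega>. \<omega> \<in> \<Omega> \<Longrightarrow> w \<omega> \<ge> 0) \<Longrightarrow> (\<And>\<omega>. \<omega> \<in> \<Omega> \<Longrightarrow> f \<omega> \<ge> 0) \<Longrightarrow> Ew \<Omega> w f \<ge> 0"
  unfolding Ew_def by (intro sum_nonneg mult_nonneg_nonneg) auto

lemma Ew_const: "sum w \<Omega> = 1 \<Longrightarrow> Ew \<Omega> w (\<lambda>_. c) = c"
  unfolding Ew_def by (simp add: sum_distrib_right[symmetric])

lemma card_filter_sum: "finite A \<Longrightarrow> real (card {i\<in>A. P i}) = (\<Sum>i\<in>A. of_bool (P i))"
proof -
  assume f: "finite A"
  have e: "{i\<in>A. P i} = A \<inter> Collect P" by auto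
  have "real (card (A \<inter> Collect P)) = (\<Sum>i\<in>A \<inter> Collect P. 1)" by simp
  also have "\<dots> = (\<Sum>i\<in>A. if i \<in> Collect P then 1 else 0)" using f by (rule sum.inter_restrict)
  finally show ?thesis unfolding e by (simp add: of_bool_def)
qed

definition Wc :: "nat \<Rightarrow> ('a \<Rightarrow> nat \<Rightarrow> bool) \<Rightarrow> 'a \<Rightarrow> nat" where
  "Wc n I \<omega> = card {i. i < n \<and> I \<omega> i}"

definition Uc :: "nat \<Rightarrow> ('a \<Rightarrow> nat \<Rightarrow> bool) \<Rightarrow> nat \<Rightarrow> 'a \<Rightarrow> nat" where
  "Uc n I i \<omega> = card {j. j < n \<and> j \<noteq> i \<and> I \<omega> j}"

lemma W_sum: "real (Wc n I \<omega>) = (\<Sum>i<n. of_bool (I \<omega> i))"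
proof -
  have "{i. i < n \<and> I \<omega> i} = {i\<in>{..<n}. I \<omega> i}" by auto
  thus ?thesis unfolding Wc_def using card_filter_sum[of "{..<n}" "I \<omega>"] by simp
qed

lemma U_sum: "real (Uc n I i \<omega>) = (\<Sum>j\<in>{..<n}-{i}. of_bool (I \<omega> j))"
proof -
  have "{j. j < n \<and> j \<noteq> i \<and> I \<omega> j} = {j\<in>{..<n}-{i}. I \<omega> j}" by auto
  thus ?thesis unfolding Uc_def using card_filter_sum[of "{..<n}-{i}" "I \<omega>"] by simp
qed

lemma W_U: assumes "i < n" shows "real (Wc n I \<omega>) = real (Uc n I i \<omega>) + of_bool (I \<omega> i)"
proof -
  have "{..<n} = insert i ({..<n}-{i})" using assms by auto
  hence "(\<Sum>j<n. of_bool (I \<omega> j) :: real) = of_bool (I \<omega> i) + (\<Sum>j\<in>{..<n}-{i}. of_bool (I \<omega> j))"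
    by (metis finite_Diff finite_lessThan insert_Diff_single insert_absorb2 sum.insert_remove)
  thus ?thesis unfolding W_sum U_sum by simp
qed

lemma W_U_nat: assumes "i < n" shows "Wc n I \<omega> = Uc n I i \<omega> + (if I \<omega> i then 1 else 0)"
  using W_U[OF assms, of I \<omega>] by (cases "I \<omega> i") auto

lemma U_lt: assumes "i < n" shows "Uc n I i \<omega> < n"
proof -
  have "{j. j < n \<and> j \<noteq> i \<and> I \<omega> j} \<subseteq> {..<n} - {i}" by auto
  hence "Uc n I i \<omega> \<le> card ({..<n} - {i})" unfolding Uc_def by (intro card_mono) auto
  also have "\<dots> = n - 1" using assms by simp
  finally show ?thesis using assms by simp
qed

lemma u_sum: assumes "u \<le> n" shows "real u = (\<Sum>k<n. of_bool (k < u))"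
proof -
  have "(\<Sum>k<n. of_bool (k < u) :: real) = (\<Sum>k<u. 1)"
    using assms by (intro sum.mono_neutral_cong_right) auto
  thus ?thesis by simp
qed

lemma g_tel: fixes g :: "nat \<Rightarrow> real" assumes "u \<le> n"
  shows "g (Suc u) = g 1 + (\<Sum>k<n. of_bool (k < u) * (g (Suc (Suc k)) - g (Suc k)))"
proof -
  have "(\<Sum>k<n. of_bool (k < u) * (g (Suc (Suc k)) - g (Suc k))) = (\<Sum>k<u. g (Suc (Suc k)) - g (Suc k))"
    using assms by (intro sum.mono_neutral_cong_right) auto
  also have "\<dots> = g (Suc u) - g (Suc 0)"
    by (rule sum_lessThan_telescope[where f = "\<lambda>k. g (Suc k)"])
  finally show ?thesis by simp
qed

lemma stein_core:
  fixes \<Omega> :: "'a set" and w :: "'a \<Rightarrow> real" and I :: "'a \<Rightarrow> nat \<Rightarrow> bool" and g :: "nat \<Rightarrow> real" and c :: real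
  assumes wnn: "\<And>\<omega>. \<omega> \<in> \<Omega> \<Longrightarrow> w \<omega> \<ge> 0" and wsum: "sum w \<Omega> = 1"
    and gD: "\<And>k. k \<ge> 1 \<Longrightarrow> g (Suc k) - g k \<le> c"
    and NR: "\<And>i k. i < n \<Longrightarrow> Ew \<Omega> w (\<lambda>\<omega>. of_bool (I \<omega> i) * of_bool (k < Uc n I i \<omega>))
                \<le> Ew \<Omega> w (\<lambda>\<omega>. of_bool (I \<omega> i)) * Ew \<Omega> w (\<lambda>\<omega>. of_bool (k < Uc n I i \<omega>))"
  defines "lam \<equiv> Ew \<Omega> w (\<lambda>\<omega>. real (Wc n I \<omega>))"
  shows "Ew \<Omega> w (\<lambda>\<omega>. lam * g (Suc (Wc n I \<omega>)) - real (Wc n I \<omega>) * g (Wc n I \<omega>))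
           \<le> c * (lam - (Ew \<Omega> w (\<lambda>\<omega>. (real (Wc n I \<omega>))\<^sup>2) - lam\<^sup>2))"
proof -
  define E where "E = Ew \<Omega> w"
  define ind where "ind i \<omega> = (of_bool (I \<omega> i) :: real)" for i \<omega>
  define W where "W = Wc n I"
  define U where "U = Uc n I"
  define \<pi> where "\<pi> i = E (ind i)" for i
  have Eadd: "E (\<lambda>\<omega>. f \<omega> + h \<omega>) = E f + E h" for f h unfolding E_def by (rule Ew_add)
  have Ediff: "E (\<lambda>\<omega>. f \<omega> - h \<omega>) = E f - E h" for f h unfolding E_def by (rule Ew_diff)
  have Ecm: "E (\<lambda>\<omega>. a * f \<omega>) = a * E f" for a f unfolding E_def by (rule Ew_cmult)
  have Esum: "E (\<lambda>\<omega>. \<Sum>i\<in>S. f i \<omega>) = (\<Sum>i\<in>S. E (f i))" for S f unfolding E_def by (rule Ew_sum)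
  have Econst: "E (\<lambda>_. a) = a" for a unfolding E_def by (rule Ew_const[OF wsum])
  have Econg: "(\<And>\<omega>. \<omega> \<in> \<Omega> \<Longrightarrow> f \<omega> = h \<omega>) \<Longrightarrow> E f = E h" for f h unfolding E_def by (rule Ew_cong)
  have Emono: "(\<And>\<omega>. \<omega> \<in> \<Omega> \<Longrightarrow> f \<omega> \<le> h \<omega>) \<Longrightarrow> E f \<le> E h" for f h unfolding E_def by (rule Ew_mono[OF wnn])
  have ind01: "ind i \<omega> * ind i \<omega> = ind i \<omega>" for i \<omega> unfolding ind_def by simp
  have pinn: "\<pi> i \<ge> 0" for i unfolding \<pi>_def E_def ind_def by (rule Ew_nonneg[OF wnn]) simp_all
  have WU: "i < n \<Longrightarrow> real (W \<omega>) = real (U i \<omega>) + ind i \<omega>" for i \<omega>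
    unfolding W_def U_def ind_def by (rule W_U)
  have WUn: "i < n \<Longrightarrow> W \<omega> = U i \<omega> + (if I \<omega> i then 1 else 0)" for i \<omega>
    unfolding W_def U_def by (rule W_U_nat)
  have Ult: "i < n \<Longrightarrow> U i \<omega> < n" for i \<omega> unfolding U_def by (rule U_lt)
  have Wsum: "real (W \<omega>) = (\<Sum>i<n. ind i \<omega>)" for \<omega> unfolding W_def ind_def by (rule W_sum)
  have lam_sum: "lam = (\<Sum>i<n. \<pi> i)"
    unfolding lam_def E_def[symmetric] W_def[symmetric] Wsum Esum \<pi>_def ..
  have WgW: "real (W \<omega>) * g (W \<omega>) = (\<Sum>i<n. ind i \<omega> * g (Suc (U i \<omega>)))" for \<omega>
  proof -
    have "real (W \<omega>) * g (W \<omega>) = (\<Sum>i<n. ind i \<omega> * g (W \<omega>))" unfolding Wsum by (rule sum_distrib_right)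
    also have "\<dots> = (\<Sum>i<n. ind i \<omega> * g (Suc (U i \<omega>)))"
    proof (rule sum.cong[OF refl])
      fix i assume "i \<in> {..<n}"
      hence "W \<omega> = U i \<omega> + (if I \<omega> i then 1 else 0)" using WUn by simp
      thus "ind i \<omega> * g (W \<omega>) = ind i \<omega> * g (Suc (U i \<omega>))" unfolding ind_def by auto
    qed
    finally show ?thesis .
  qed
  have t1: "E (\<lambda>\<omega>. g (Suc (W \<omega>))) - E (\<lambda>\<omega>. g (Suc (U i \<omega>))) \<le> c * \<pi> i" if i: "i < n" for i
  proof -
    have "E (\<lambda>\<omega>. g (Suc (W \<omega>))) - E (\<lambda>\<omega>. g (Suc (U i \<omega>))) = E (\<lambda>\<omega>. g (Suc (W \<omega>)) - g (Suc (U i \<omega>)))"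
      by (rule Ediff[symmetric])
    also have "\<dots> \<le> E (\<lambda>\<omega>. c * ind i \<omega>)"
    proof (rule Emono)
      fix \<omega>
      show "g (Suc (W \<omega>)) - g (Suc (U i \<omega>)) \<le> c * ind i \<omega>"
      proof (cases "I \<omega> i")
        case True
        hence "W \<omega> = Suc (U i \<omega>)" using WUn[OF i, of \<omega>] by simp
        thus ?thesis using True gD[of "Suc (U i \<omega>)"] unfolding ind_def by simp
      next
        case False
        hence "W \<omega> = U i \<omega>" using WUn[OF i, of \<omega>] by simp
        thus ?thesis using False unfolding ind_def by simp
      qed
    qed
    also have "\<dots> = c * \<pi> i" unfolding Ecm \<pi>_def ..
    finally show ?thesis .
  qed
  define D where "D k = g (Suc (Suc k)) - g (Suc k)" for k
  have DC: "D k \<le> c" for k unfolding D_def using gD[of "Suc k"] by simp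
  have t2: "\<pi> i * E (\<lambda>\<omega>. g (Suc (U i \<omega>))) - E (\<lambda>\<omega>. ind i \<omega> * g (Suc (U i \<omega>)))
       \<le> c * (\<pi> i * E (\<lambda>\<omega>. real (U i \<omega>)) - E (\<lambda>\<omega>. ind i \<omega> * real (U i \<omega>)))" if i: "i < n" for i
  proof -
    define pk where "pk k = E (\<lambda>\<omega>. of_bool (k < U i \<omega>))" for k
    define qk where "qk k = E (\<lambda>\<omega>. ind i \<omega> * of_bool (k < U i \<omega>))" for k
    have tel: "g (Suc (U i \<omega>)) = g 1 + (\<Sum>k<n. D k * of_bool (k < U i \<omega>))" for \<omega>
      using g_tel[of "U i \<omega>" n g] Ult[OF i, of \<omega>] unfolding D_def by (simp add: mult.commute)
    have e1: "E (\<lambda>\<omega>. g (Suc (U i \<omega>))) = g 1 + (\<Sum>k<n. D k * pk k)"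
      unfolding tel Eadd Econst Esum Ecm pk_def ..
    have e2: "E (\<lambda>\<omega>. ind i \<omega> * g (Suc (U i \<omega>))) = g 1 * \<pi> i + (\<Sum>k<n. D k * qk k)"
    proof -
      have "E (\<lambda>\<omega>. ind i \<omega> * g (Suc (U i \<omega>))) = E (\<lambda>\<omega>. g 1 * ind i \<omega> + (\<Sum>k<n. D k * (ind i \<omega> * of_bool (k < U i \<omega>))))"
        unfolding tel by (intro arg_cong[where f=E] ext) (simp only: distrib_left sum_distrib_left ac_simps)
      thus ?thesis unfolding Eadd Esum Ecm qk_def \<pi>_def .
    qed
    have usum: "real (U i \<omega>) = (\<Sum>k<n. of_bool (k < U i \<omega>))" for \<omega>
      using u_sum[of "U i \<omega>" n] Ult[OF i, of \<omega>] by simp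
    have sp: "(\<Sum>k<n. pk k) = E (\<lambda>\<omega>. real (U i \<omega>))" unfolding usum Esum pk_def ..
    have sq: "(\<Sum>k<n. qk k) = E (\<lambda>\<omega>. ind i \<omega> * real (U i \<omega>))" unfolding usum sum_distrib_left Esum qk_def ..
    have "\<pi> i * E (\<lambda>\<omega>. g (Suc (U i \<omega>))) - E (\<lambda>\<omega>. ind i \<omega> * g (Suc (U i \<omega>)))
        = (\<Sum>k<n. D k * (\<pi> i * pk k - qk k))"
      unfolding e1 e2 by (simp add: algebra_simps sum_distrib_left sum_subtractf)
    also have "\<dots> \<le> (\<Sum>k<n. c * (\<pi> i * pk k - qk k))"
    proof (rule sum_mono)
      fix k
      have "qk k \<le> \<pi> i * pk k" using NR[OF i, of k]
        unfolding qk_def pk_def \<pi>_def E_def ind_def U_def .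
      thus "D k * (\<pi> i * pk k - qk k) \<le> c * (\<pi> i * pk k - qk k)"
        using DC[of k] by (intro mult_right_mono) auto
    qed
    also have "\<dots> = c * (\<pi> i * E (\<lambda>\<omega>. real (U i \<omega>)) - E (\<lambda>\<omega>. ind i \<omega> * real (U i \<omega>)))"
      unfolding sp[symmetric] sq[symmetric] by (simp add: sum_distrib_left sum_subtractf algebra_simps)
    finally show ?thesis .
  qed
  have LHS: "E (\<lambda>\<omega>. lam * g (Suc (W \<omega>)) - real (W \<omega>) * g (W \<omega>))
      = (\<Sum>i<n. \<pi> i * E (\<lambda>\<omega>. g (Suc (W \<omega>))) - E (\<lambda>\<omega>. ind i \<omega> * g (Suc (U i \<omega>))))"
    unfolding Ediff Ecm WgW Esum lam_sum by (simp add: sum_distrib_right sum_subtractf)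
  also have "\<dots> \<le> (\<Sum>i<n. c * (\<pi> i * \<pi> i + \<pi> i * E (\<lambda>\<omega>. real (U i \<omega>)) - E (\<lambda>\<omega>. ind i \<omega> * real (U i \<omega>))))"
  proof (rule sum_mono)
    fix i assume "i \<in> {..<n}"
    hence i: "i < n" by simp
    have a: "\<pi> i * (E (\<lambda>\<omega>. g (Suc (W \<omega>))) - E (\<lambda>\<omega>. g (Suc (U i \<omega>)))) \<le> \<pi> i * (c * \<pi> i)"
      using t1[OF i] pinn[of i] by (rule mult_left_mono)
    show "\<pi> i * E (\<lambda>\<omega>. g (Suc (W \<omega>))) - E (\<lambda>\<omega>. ind i \<omega> * g (Suc (U i \<omega>)))
       \<le> c * (\<pi> i * \<pi> i + \<pi> i * E (\<lambda>\<omega>. real (U i \<omega>)) - E (\<lambda>\<omega>. ind i \<omega> * real (U i \<omega>)))"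
      using a t2[OF i] by (simp add: algebra_simps)
  qed
  also have "\<dots> = c * (lam - (E (\<lambda>\<omega>. (real (W \<omega>))\<^sup>2) - lam\<^sup>2))"
  proof -
    have eu: "E (\<lambda>\<omega>. real (U i \<omega>)) = lam - \<pi> i" if i: "i < n" for i
    proof -
      have "E (\<lambda>\<omega>. real (U i \<omega>)) = E (\<lambda>\<omega>. real (W \<omega>) - ind i \<omega>)"
        by (rule Econg) (simp add: WU[OF i])
      thus ?thesis unfolding Ediff lam_def E_def[symmetric] W_def[symmetric] \<pi>_def .
    qed
    have eiu: "E (\<lambda>\<omega>. ind i \<omega> * real (U i \<omega>)) = E (\<lambda>\<omega>. ind i \<omega> * real (W \<omega>)) - \<pi> i" if i: "i < n" for i
    proof -
      have "E (\<lambda>\<omega>. ind i \<omega> * real (U i \<omega>)) = E (\<lambda>\<omega>. ind i \<omega> * real (W \<omega>) - ind i \<omega>)"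
        by (rule Econg) (simp add: WU[OF i] distrib_left ind01)
      thus ?thesis unfolding Ediff \<pi>_def .
    qed
    have ew2: "(\<Sum>i<n. E (\<lambda>\<omega>. ind i \<omega> * real (W \<omega>))) = E (\<lambda>\<omega>. (real (W \<omega>))\<^sup>2)"
    proof -
      have "E (\<lambda>\<omega>. (real (W \<omega>))\<^sup>2) = E (\<lambda>\<omega>. \<Sum>i<n. ind i \<omega> * real (W \<omega>))"
        by (rule Econg) (simp add: power2_eq_square Wsum[symmetric] sum_distrib_right[symmetric])
      thus ?thesis unfolding Esum by simp
    qed
    have "(\<Sum>i<n. c * (\<pi> i * \<pi> i + \<pi> i * E (\<lambda>\<omega>. real (U i \<omega>)) - E (\<lambda>\<omega>. ind i \<omega> * real (U i \<omega>))))
        = (\<Sum>i<n. c * (\<pi> i * lam + \<pi> i - E (\<lambda>\<omega>. ind i \<omega> * real (W \<omega>))))"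
      by (intro sum.cong refl) (simp add: eu eiu algebra_simps)
    also have "\<dots> = c * (lam * (\<Sum>i<n. \<pi> i) + (\<Sum>i<n. \<pi> i) - (\<Sum>i<n. E (\<lambda>\<omega>. ind i \<omega> * real (W \<omega>))))"
      by (simp add: sum_distrib_left sum_subtractf sum.distrib algebra_simps)
    also have "\<dots> = c * (lam - (E (\<lambda>\<omega>. (real (W \<omega>))\<^sup>2) - lam\<^sup>2))"
      unfolding ew2 lam_sum[symmetric] by (simp add: power2_eq_square algebra_simps)
    finally show ?thesis .
  qed
  finally show ?thesis unfolding E_def W_def .
qed



lemma finite_set_Pi_pmf:
  assumes "finite A" "\<And>a. finite (set_pmf (q a))"
  shows "finite (set_pmf (Pi_pmf A d q))"
  using set_Pi_pmf_subset'[OF assms(1), of d q] finite_PiE_dflt[OF assms(1), of "set_pmf \<circ> q" d] assms(2)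
  by (auto intro: finite_subset)

lemma Pi_exp_insert:
  fixes h :: "('i \<Rightarrow> real) \<Rightarrow> real"
  assumes "finite A" "x \<notin> A" "\<And>a. finite (set_pmf (q a))"
  shows "measure_pmf.expectation (Pi_pmf (insert x A) d q) h
       = (\<Sum>y\<in>set_pmf (q x). pmf (q x) y * measure_pmf.expectation (Pi_pmf A d q) (\<lambda>om. h (om(x := y))))"
proof -
  have "Pi_pmf (insert x A) d q = bind_pmf (q x) (\<lambda>y. map_pmf (\<lambda>f. f(x := y)) (Pi_pmf A d q))"
    unfolding Pi_pmf_insert'[OF assms(1,2)] map_pmf_def ..
  hence "measure_pmf.expectation (Pi_pmf (insert x A) d q) h
      = (\<Sum>y\<in>set_pmf (q x). pmf (q x) y *\<^sub>R measure_pmf.expectation (map_pmf (\<lambda>f. f(x := y)) (Pi_pmf A d q)) h)"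
    using assms finite_set_Pi_pmf[OF assms(1,3)]
    by (simp add: pmf_expectation_bind[where A="set_pmf (q x)"])
  thus ?thesis by simp
qed

lemma cheb:
  fixes w F G :: "'b \<Rightarrow> real"
  assumes "finite Y" "\<And>y. y \<in> Y \<Longrightarrow> w y \<ge> 0" "sum w Y = 1"
    "\<And>y z. y \<in> Y \<Longrightarrow> z \<in> Y \<Longrightarrow> (F y - F z) * (G y - G z) \<le> 0"
  shows "(\<Sum>y\<in>Y. w y * (F y * G y)) \<le> (\<Sum>y\<in>Y. w y * F y) * (\<Sum>y\<in>Y. w y * G y)"
proof -
  have "(\<Sum>y\<in>Y. \<Sum>z\<in>Y. w y * w z * ((F y - F z) * (G y - G z))) \<le> 0"
  proof (intro sum_nonpos)
    fix y z
    assume yz: "y \<in> Y" "z \<in> Y"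
    show "w y * w z * ((F y - F z) * (G y - G z)) \<le> 0"
      by (rule mult_nonneg_nonpos) (use assms yz in auto)
  qed
  moreover have "(\<Sum>y\<in>Y. \<Sum>z\<in>Y. w y * w z * ((F y - F z) * (G y - G z)))
    = (\<Sum>y\<in>Y. \<Sum>z\<in>Y. w z * (w y * (F y * G y))) + (\<Sum>y\<in>Y. \<Sum>z\<in>Y. w y * (w z * (F z * G z)))
      - (\<Sum>y\<in>Y. \<Sum>z\<in>Y. (w y * F y) * (w z * G z)) - (\<Sum>y\<in>Y. \<Sum>z\<in>Y. (w y * G y) * (w z * F z))"
    by (simp add: sum_subtractf sum.distrib algebra_simps)
  moreover have "(\<Sum>y\<in>Y. \<Sum>z\<in>Y. w z * (w y * (F y * G y))) = (\<Sum>y\<in>Y. w y * (F y * G y))"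
    by (simp add: sum_distrib_right[symmetric] assms(3))
  moreover have "(\<Sum>y\<in>Y. \<Sum>z\<in>Y. w y * (w z * (F z * G z))) = (\<Sum>y\<in>Y. w y * (F y * G y))"
    by (simp add: sum_distrib_left[symmetric] sum_distrib_right[symmetric] assms(3))
  moreover have "(\<Sum>y\<in>Y. \<Sum>z\<in>Y. (w y * F y) * (w z * G z)) = (\<Sum>y\<in>Y. w y * F y) * (\<Sum>y\<in>Y. w y * G y)"
    by (simp add: sum_product)
  moreover have "(\<Sum>y\<in>Y. \<Sum>z\<in>Y. (w y * G y) * (w z * F z)) = (\<Sum>y\<in>Y. w y * F y) * (\<Sum>y\<in>Y. w y * G y)"
  proof -
    have "(\<Sum>y\<in>Y. w y * G y) * (\<Sum>y\<in>Y. w y * F y) = (\<Sum>y\<in>Y. \<Sum>z\<in>Y. (w y * G y) * (w z * F z))"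
      by (rule sum_product)
    thus ?thesis by (simp only: mult.commute)
  qed
  ultimately show ?thesis by linarith
qed

lemma harris:
  fixes q :: "'i \<Rightarrow> real pmf" and f g :: "('i \<Rightarrow> real) \<Rightarrow> real" and \<sigma> :: "'i \<Rightarrow> real"
  assumes "finite D" "\<And>a. finite (set_pmf (q a))"
    and "\<And>om a u. a \<notin> S \<Longrightarrow> f (om(a := u)) = f om"
    and "\<And>om a u v. a \<in> S \<Longrightarrow> \<sigma> a * u \<le> \<sigma> a * v \<Longrightarrow> f (om(a := u)) \<le> f (om(a := v))"
    and "\<And>om a u v. a \<in> S \<Longrightarrow> \<sigma> a * u \<le> \<sigma> a * v \<Longrightarrow> g (om(a := v)) \<le> g (om(a := u))"
  shows "measure_pmf.expectation (Pi_pmf D d q) (\<lambda>om. f om * g om)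
     \<le> measure_pmf.expectation (Pi_pmf D d q) f * measure_pmf.expectation (Pi_pmf D d q) g"
  using assms(1,3,4,5)
proof (induction D arbitrary: f g rule: finite_induct)
  case empty
  thus ?case by simp
next
  case (insert x A)
  let ?P = "Pi_pmf A d q"
  let ?E = "measure_pmf.expectation ?P"
  define F where "F y = ?E (\<lambda>om. f (om(x := y)))" for y
  define G where "G y = ?E (\<lambda>om. g (om(x := y)))" for y
  have finP: "finite (set_pmf ?P)" by (rule finite_set_Pi_pmf[OF insert(1) assms(2)])
  have int: "integrable (measure_pmf ?P) h" for h :: "_ \<Rightarrow> real"
    by (rule integrable_measure_pmf_finite[OF finP])
  have IH: "?E (\<lambda>om. f (om(x := y)) * g (om(x := y))) \<le> F y * G y" for y
    unfolding F_def G_def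
  proof (rule insert.IH)
    fix om a u
    assume aS: "a \<notin> S"
    show "f (om(a := u, x := y)) = f (om(x := y))"
    proof (cases "a = x")
      case True thus ?thesis by simp
    next
      case False
      hence tw: "\<And>c. om(a := c, x := y) = (om(x := y))(a := c)" by (simp add: fun_upd_twist)
      show ?thesis unfolding tw by (rule insert.prems(1)[OF aS])
    qed
  next
    fix om a u v
    assume aS: "a \<in> S" "\<sigma> a * u \<le> \<sigma> a * v"
    show "f (om(a := u, x := y)) \<le> f (om(a := v, x := y))"
    proof (cases "a = x")
      case True thus ?thesis by simp
    next
      case False
      hence tw: "\<And>c. om(a := c, x := y) = (om(x := y))(a := c)" by (simp add: fun_upd_twist)
      show ?thesis unfolding tw by (rule insert.prems(2)[OF aS])
    qed
  next
    fix om a u v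
    assume aS: "a \<in> S" "\<sigma> a * u \<le> \<sigma> a * v"
    show "g (om(a := v, x := y)) \<le> g (om(a := u, x := y))"
    proof (cases "a = x")
      case True thus ?thesis by simp
    next
      case False
      hence tw: "\<And>c. om(a := c, x := y) = (om(x := y))(a := c)" by (simp add: fun_upd_twist)
      show ?thesis unfolding tw by (rule insert.prems(3)[OF aS])
    qed
  qed
  have ex: "measure_pmf.expectation (Pi_pmf (insert x A) d q) h
       = (\<Sum>y\<in>set_pmf (q x). pmf (q x) y * ?E (\<lambda>om. h (om(x := y))))" for h
    by (rule Pi_exp_insert[OF insert(1,2) assms(2)])
  have "measure_pmf.expectation (Pi_pmf (insert x A) d q) (\<lambda>om. f om * g om)
      = (\<Sum>y\<in>set_pmf (q x). pmf (q x) y * ?E (\<lambda>om. f (om(x := y)) * g (om(x := y))))"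
    by (rule ex)
  also have "\<dots> \<le> (\<Sum>y\<in>set_pmf (q x). pmf (q x) y * (F y * G y))"
    by (intro sum_mono mult_left_mono IH) auto
  also have "\<dots> \<le> (\<Sum>y\<in>set_pmf (q x). pmf (q x) y * F y) * (\<Sum>y\<in>set_pmf (q x). pmf (q x) y * G y)"
  proof (rule cheb)
    show "sum (pmf (q x)) (set_pmf (q x)) = 1" using assms(2) by (rule sum_pmf_eq_1) simp
    fix y z
    show "(F y - F z) * (G y - G z) \<le> 0"
    proof (cases "x \<in> S")
      case False
      have e: "\<And>om c. f (om(x := c)) = f om" by (rule insert.prems(1)[OF False])
      have "F y = F z" unfolding F_def e ..
      thus ?thesis by simp
    next
      case True
      have mF: "F y \<le> F z" "G z \<le> G y" if "\<sigma> x * y \<le> \<sigma> x * z" for y z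
      proof -
        show "F y \<le> F z" unfolding F_def
          by (rule integral_mono[OF int int]) (rule insert.prems(2)[OF True that])
        show "G z \<le> G y" unfolding G_def
          by (rule integral_mono[OF int int]) (rule insert.prems(3)[OF True that])
      qed
      show ?thesis
      proof (cases "\<sigma> x * y \<le> \<sigma> x * z")
        case True
        thus ?thesis using mF[OF True] by (intro mult_nonpos_nonneg) auto
      next
        case False
        hence "\<sigma> x * z \<le> \<sigma> x * y" by simp
        thus ?thesis using mF[of z y] by (intro mult_nonneg_nonpos) auto
      qed
    qed
  qed (use assms(2) in auto)
  also have "\<dots> = measure_pmf.expectation (Pi_pmf (insert x A) d q) f * measure_pmf.expectation (Pi_pmf (insert x A) d q) g"
    unfolding ex F_def G_def ..
  finally show ?case .
qed



lemma game_finite: "finite (set_pmf (game_pmf p))"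
proof -
  have "set_pmf (game_pmf p) \<subseteq> {1/2, 1, 0}" by (auto simp: game_pmf_def split: if_splits)
  thus ?thesis by (rule finite_subset) simp
qed

lemma tour_finite: "finite (set_pmf (tournament_pmf n p))"
  unfolding tournament_pmf_def
proof (rule finite_set_Pi_pmf)
  show "finite {(i, j). i < j \<and> j < n}"
    by (rule finite_subset[of _ "{..<n} \<times> {..<n}"]) auto
qed (rule game_finite)

definition sg :: "nat \<Rightarrow> nat \<times> nat \<Rightarrow> real" where "sg i a = (if fst a = i then 1 else -1)"

lemma X_inv: assumes "fst a \<noteq> i" "snd a \<noteq> i" shows "X (om(a := u)) i j = X om i j"
proof -
  have "(i, j) \<noteq> a" "(j, i) \<noteq> a" using assms by auto
  thus ?thesis unfolding X_def by simp
qed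

lemma X_mono_i:
  assumes "fst a = i \<or> snd a = i" "sg i a * u \<le> sg i a * v" "j \<noteq> i"
  shows "X (om(a := u)) i j \<le> X (om(a := v)) i j"
proof -
  consider "a = (i, j)" | "a = (j, i)" | "(i, j) \<noteq> a \<and> (j, i) \<noteq> a" by auto
  thus ?thesis
  proof cases
    case 1
    hence "u \<le> v" using assms(2) by (simp add: sg_def)
    moreover have "(j, i) \<noteq> (i, j)" using assms(3) by simp
    ultimately show ?thesis unfolding X_def 1 by simp
  next
    case 2
    hence "v \<le> u" using assms(2,3) by (simp add: sg_def)
    moreover have "(i, j) \<noteq> (j, i)" using assms(3) by simp
    ultimately show ?thesis unfolding X_def 2 by simp
  next
    case 3
    thus ?thesis unfolding X_def by simp
  qed
qed

lemma X_anti_j: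
  assumes "fst a = i \<or> snd a = i" "sg i a * u \<le> sg i a * v" "j \<noteq> i"
  shows "X (om(a := v)) j l \<le> X (om(a := u)) j l"
proof -
  consider "a = (j, l)" | "a = (l, j)" | "(j, l) \<noteq> a \<and> (l, j) \<noteq> a" by auto
  thus ?thesis
  proof cases
    case 1
    hence "l = i" using assms(1,3) by auto
    hence "v \<le> u" using assms(2,3) 1 by (simp add: sg_def)
    moreover have "(l, j) \<noteq> (j, l)" using assms(3) \<open>l = i\<close> by simp
    ultimately show ?thesis unfolding X_def 1 by simp
  next
    case 2
    hence "l = i" using assms(1,3) by auto
    hence "u \<le> v" using assms(2,3) 2 by (simp add: sg_def)
    moreover have "(j, l) \<noteq> (l, j)" using assms(3) \<open>l = i\<close> by simp
    ultimately show ?thesis unfolding X_def 2 by simp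
  next
    case 3
    thus ?thesis unfolding X_def by simp
  qed
qed

lemma score_inv: assumes "fst a \<noteq> i" "snd a \<noteq> i" shows "score n (om(a := u)) i = score n om i"
  unfolding score_def using X_inv[OF assms] by simp

lemma score_mono_i:
  assumes "fst a = i \<or> snd a = i" "sg i a * u \<le> sg i a * v"
  shows "score n (om(a := u)) i \<le> score n (om(a := v)) i"
  unfolding score_def by (rule sum_mono) (rule X_mono_i[OF assms]; simp)

lemma score_anti_j:
  assumes "fst a = i \<or> snd a = i" "sg i a * u \<le> sg i a * v" "j \<noteq> i"
  shows "score n (om(a := v)) j \<le> score n (om(a := u)) j"
  unfolding score_def by (rule sum_mono) (rule X_anti_j[OF assms])

lemma sstar_mono:
  assumes "p \<le> 1" "n \<ge> 1" "score n om i \<le> score n om' j"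
  shows "sstar n p om i \<le> sstar n p om' j"
proof -
  have "(real n - 1) * (1 - p) / 4 \<ge> 0" using assms(1,2) by simp
  hence "sqrt ((real n - 1) * (1 - p) / 4) \<ge> 0" by simp
  thus ?thesis unfolding sstar_def using assms(3) by (intro divide_right_mono) auto
qed

definition Ip :: "nat \<Rightarrow> real \<Rightarrow> real \<Rightarrow> (nat \<times> nat \<Rightarrow> real) \<Rightarrow> nat \<Rightarrow> bool" where
  "Ip n p t om i = (x_n n t < sstar n p om i)"

lemma NR_tour:
  assumes "p \<le> 1" "i < n"
  shows "measure_pmf.expectation (tournament_pmf n p) (\<lambda>om. of_bool (Ip n p t om i) * of_bool (k < Uc n (Ip n p t) i om) :: real)
    \<le> measure_pmf.expectation (tournament_pmf n p) (\<lambda>om. of_bool (Ip n p t om i))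
      * measure_pmf.expectation (tournament_pmf n p) (\<lambda>om. of_bool (k < Uc n (Ip n p t) i om))"
proof -
  have n1: "n \<ge> 1" using assms(2) by simp
  show ?thesis unfolding tournament_pmf_def
proof (rule harris[where S = "{a. fst a = i \<or> snd a = i}" and \<sigma> = "sg i"
    and f = "\<lambda>om. of_bool (Ip n p t om i)" and g = "\<lambda>om. of_bool (k < Uc n (Ip n p t) i om)"])
  show "finite {(i, j). i < j \<and> j < n}"
    by (rule finite_subset[of _ "{..<n} \<times> {..<n}"]) auto
  show "finite (set_pmf (game_pmf p))" for a by (rule game_finite)
next
  fix om a u
  assume "a \<notin> {a. fst a = i \<or> snd a = i}"
  hence "score n (om(a := u)) i = score n om i" by (intro score_inv) auto
  thus "of_bool (Ip n p t (om(a := u)) i) = (of_bool (Ip n p t om i) :: real)"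
    unfolding Ip_def sstar_def by simp
next
  fix om a u v
  assume "a \<in> {a. fst a = i \<or> snd a = i}" "sg i a * u \<le> sg i a * v"
  hence "score n (om(a := u)) i \<le> score n (om(a := v)) i" by (intro score_mono_i) auto
  hence "sstar n p (om(a := u)) i \<le> sstar n p (om(a := v)) i" by (rule sstar_mono[OF assms(1) n1])
  thus "of_bool (Ip n p t (om(a := u)) i) \<le> (of_bool (Ip n p t (om(a := v)) i) :: real)"
    unfolding Ip_def by auto
next
  fix om a u v
  assume a: "a \<in> {a. fst a = i \<or> snd a = i}" "sg i a * u \<le> sg i a * v"
  have "{j. j < n \<and> j \<noteq> i \<and> Ip n p t (om(a := v)) j} \<subseteq> {j. j < n \<and> j \<noteq> i \<and> Ip n p t (om(a := u)) j}"
  proof safe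
    fix j assume j: "j < n" "j \<noteq> i" "Ip n p t (om(a := v)) j"
    have "score n (om(a := v)) j \<le> score n (om(a := u)) j" using a j(2) by (intro score_anti_j) auto
    hence "sstar n p (om(a := v)) j \<le> sstar n p (om(a := u)) j" by (rule sstar_mono[OF assms(1) n1])
    thus "Ip n p t (om(a := u)) j" using j(3) unfolding Ip_def by auto
  qed
  hence "Uc n (Ip n p t) i (om(a := v)) \<le> Uc n (Ip n p t) i (om(a := u))"
    unfolding Uc_def by (intro card_mono) auto
  thus "of_bool (k < Uc n (Ip n p t) i (om(a := v))) \<le> (of_bool (k < Uc n (Ip n p t) i (om(a := u))) :: real)"
    by auto
qed
qed



lemma dTV_formula:
  fixes P :: "nat \<Rightarrow> real"
  assumes P0: "\<And>k. k > n \<Longrightarrow> P k = 0" and P1: "(\<Sum>k\<le>n. P k) = 1" and l: "l \<ge> 0"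
  shows "(1/2) * (\<Sum>k. \<bar>P k - poisson_mass l k\<bar>) = (\<Sum>k\<in>{k. k \<le> n \<and> poisson_mass l k < P k}. P k - poisson_mass l k)"
proof -
  define Q where "Q = poisson_mass l"
  define A where "A = {k. k \<le> n \<and> Q k < P k}"
  define pos where "pos k = (if k \<in> A then P k - Q k else 0)" for k
  have finA: "finite A" unfolding A_def by (rule finite_subset[of _ "{..n}"]) auto
  have Qs: "Q sums 1" unfolding Q_def by (rule poi_sums)
  have Qnn: "Q k \<ge> 0" for k unfolding Q_def using l by (rule poi_nonneg)
  have Ps: "P sums 1"
  proof -
    have "P sums (sum P {..n})" by (rule sums_finite) (use P0 in auto)
    thus ?thesis using P1 by simp
  qed
  have poss: "pos sums (sum pos A)" by (rule sums_finite[OF finA]) (simp add: pos_def)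
  have "sum pos A = (\<Sum>k\<in>A. P k - Q k)" unfolding pos_def by simp
  have abs_eq: "\<bar>P k - Q k\<bar> = 2 * pos k - (P k - Q k)" for k
  proof (cases "k \<in> A")
    case True thus ?thesis unfolding pos_def A_def by auto
  next
    case False
    hence "P k \<le> Q k" unfolding A_def using P0[of k] Qnn[of k] by (cases "k \<le> n") auto
    thus ?thesis using False unfolding pos_def by simp
  qed
  have "(\<lambda>k. 2 * pos k - (P k - Q k)) sums (2 * sum pos A - (1 - 1))"
    by (intro sums_diff sums_mult poss Ps Qs)
  hence "(\<lambda>k. \<bar>P k - Q k\<bar>) sums (2 * sum pos A)" unfolding abs_eq by simp
  hence "(\<Sum>k. \<bar>P k - Q k\<bar>) = 2 * sum pos A" by (simp add: sums_iff)
  thus ?thesis unfolding Q_def[symmetric] A_def[symmetric] pos_def by simp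
qed

lemma Wc_le: "Wc n I om \<le> n"
proof -
  have "Wc n I om \<le> card {..<n}" unfolding Wc_def by (intro card_mono) auto
  thus ?thesis by simp
qed

lemma Wc_ne: "n < k \<Longrightarrow> Wc n I om \<noteq> k"
  using Wc_le[of n I om] by simp

lemma stein_dTV:
  fixes \<Omega> :: "'a set" and w :: "'a \<Rightarrow> real" and I :: "'a \<Rightarrow> nat \<Rightarrow> bool"
  assumes wnn: "\<And>om. om \<in> \<Omega> \<Longrightarrow> w om \<ge> 0" and wsum: "sum w \<Omega> = 1"
    and NR: "\<And>i k. i < n \<Longrightarrow> Ew \<Omega> w (\<lambda>om. of_bool (I om i) * of_bool (k < Uc n I i om))
                \<le> Ew \<Omega> w (\<lambda>om. of_bool (I om i)) * Ew \<Omega> w (\<lambda>om. of_bool (k < Uc n I i om))"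
  defines "lam \<equiv> Ew \<Omega> w (\<lambda>om. real (Wc n I om))"
  shows "(1/2) * (\<Sum>k. \<bar>Ew \<Omega> w (\<lambda>om. of_bool (Wc n I om = k)) - poisson_mass lam k\<bar>)
     \<le> (1 - exp (- lam)) / lam * (lam - (Ew \<Omega> w (\<lambda>om. (real (Wc n I om))\<^sup>2) - lam\<^sup>2))"
proof -
  define P where "P k = Ew \<Omega> w (\<lambda>om. of_bool (Wc n I om = k))" for k
  define Q where "Q = poisson_mass lam"
  define A where "A = {k. k \<le> n \<and> Q k < P k}"
  have finA: "finite A" unfolding A_def by (rule finite_subset[of _ "{..n}"]) auto
  have lam0: "lam \<ge> 0" unfolding lam_def Ew_def by (intro sum_nonneg mult_nonneg_nonneg wnn) auto
  have P0: "P k = 0" if "k > n" for k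
  proof -
    have "P k = Ew \<Omega> w (\<lambda>_. 0)" unfolding P_def by (rule Ew_cong) (use that in \<open>simp add: Wc_ne\<close>)
    thus ?thesis by (simp add: Ew_def)
  qed
  have PA: "(\<Sum>k\<in>B. P k) = Ew \<Omega> w (\<lambda>om. of_bool (Wc n I om \<in> B))" if "finite B" for B
  proof -
    have "(\<Sum>k\<in>B. P k) = Ew \<Omega> w (\<lambda>om. \<Sum>k\<in>B. of_bool (Wc n I om = k))" unfolding P_def Ew_sum ..
    also have "\<dots> = Ew \<Omega> w (\<lambda>om. of_bool (Wc n I om \<in> B))"
      by (rule Ew_cong) (simp add: of_bool_def sum.delta' that)
    finally show ?thesis .
  qed
  have P1: "(\<Sum>k\<le>n. P k) = 1"
  proof -
    have "(\<Sum>k\<le>n. P k) = Ew \<Omega> w (\<lambda>om. of_bool (Wc n I om \<in> {..n}))" by (rule PA) simp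
    also have "\<dots> = Ew \<Omega> w (\<lambda>_. 1)" by (rule Ew_cong) (simp add: Wc_le)
    finally show ?thesis using Ew_const[OF wsum] by simp
  qed
  have dtv: "(1/2) * (\<Sum>k. \<bar>P k - Q k\<bar>) = (\<Sum>k\<in>A. P k - Q k)"
    unfolding A_def Q_def by (rule dTV_formula[OF P0 P1 lam0])
  show ?thesis
  proof (cases "lam = 0")
    case True
    have "A = {}"
    proof -
      have z: "w om * real (Wc n I om) = 0" if "om \<in> \<Omega>" for om
      proof -
        have "(\<Sum>om\<in>\<Omega>. w om * real (Wc n I om)) = 0" using True unfolding lam_def Ew_def .
        moreover have "finite \<Omega>" using wsum by (metis sum.infinite zero_neq_one)
        ultimately show ?thesis using that wnn by (subst (asm) sum_nonneg_eq_0_iff) auto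
      qed
      have "P k \<le> Q k" for k
      proof (cases k)
        case 0
        have "P k \<le> Ew \<Omega> w (\<lambda>_. 1)" unfolding P_def by (rule Ew_mono[OF wnn]) (auto simp: of_bool_def)
        thus ?thesis using 0 True Ew_const[OF wsum] by (simp add: Q_def poisson_mass_def)
      next
        case (Suc m)
        have "P k = Ew \<Omega> w (\<lambda>_. 0)" unfolding P_def Ew_def
          by (rule sum.cong[OF refl]) (use z Suc in fastforce)
        thus ?thesis using True by (simp add: Q_def poisson_mass_def Ew_def)
      qed
      thus ?thesis unfolding A_def by (auto simp: not_less[symmetric])
    qed
    thus ?thesis using dtv True unfolding P_def Q_def by simp
  next
    case False
    hence lpos: "lam > 0" using lam0 by simp
    define g where "g = gA lam A"
    have "(\<Sum>k\<in>A. P k - Q k) = Ew \<Omega> w (\<lambda>om. of_bool (Wc n I om \<in> A)) - (\<Sum>k\<in>A. Q k)"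
      using PA[OF finA] by (simp add: sum_subtractf)
    also have "\<dots> = Ew \<Omega> w (\<lambda>om. of_bool (Wc n I om \<in> A) - (\<Sum>k\<in>A. Q k))"
      by (simp add: Ew_diff Ew_const[OF wsum])
    also have "\<dots> = Ew \<Omega> w (\<lambda>om. lam * g (Suc (Wc n I om)) - real (Wc n I om) * g (Wc n I om))"
      by (rule Ew_cong) (simp add: g_def gA_stein[OF lpos finA] Q_def of_bool_def)
    also have "\<dots> \<le> (1 - exp (- lam)) / lam * (lam - (Ew \<Omega> w (\<lambda>om. (real (Wc n I om))\<^sup>2) - lam\<^sup>2))"
      unfolding lam_def
    proof (rule stein_core[OF wnn wsum _ NR])
      fix k :: nat assume "k \<ge> 1"
      thus "g (Suc k) - g k \<le> (1 - exp (- Ew \<Omega> w (\<lambda>om. real (Wc n I om)))) / Ew \<Omega> w (\<lambda>om. real (Wc n I om))"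
        unfolding g_def lam_def[symmetric] by (rule gA_diff[OF lpos finA])
    qed auto
    finally show ?thesis using dtv unfolding P_def Q_def by simp
  qed
qed



lemma var_identity:
  fixes \<Omega> :: "'a set" and w :: "'a \<Rightarrow> real" and I :: "'a \<Rightarrow> nat \<Rightarrow> bool"
  shows "Ew \<Omega> w (\<lambda>om. (real (Wc n I om))\<^sup>2) - (\<Sum>i<n. Ew \<Omega> w (\<lambda>om. of_bool (I om i)))\<^sup>2
    = (\<Sum>i<n. Ew \<Omega> w (\<lambda>om. of_bool (I om i)) - (Ew \<Omega> w (\<lambda>om. of_bool (I om i)))\<^sup>2)
      + (\<Sum>i<n. \<Sum>j\<in>{..<n} - {i}. Ew \<Omega> w (\<lambda>om. of_bool (I om i) * of_bool (I om j))
            - Ew \<Omega> w (\<lambda>om. of_bool (I om i)) * Ew \<Omega> w (\<lambda>om. of_bool (I om j)))"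
proof -
  define pi where "pi i = Ew \<Omega> w (\<lambda>om. of_bool (I om i))" for i
  define C where "C i j = Ew \<Omega> w (\<lambda>om. of_bool (I om i) * of_bool (I om j)) - pi i * pi j" for i j
  have sq: "Ew \<Omega> w (\<lambda>om. (real (Wc n I om))\<^sup>2) = (\<Sum>i<n. \<Sum>j<n. Ew \<Omega> w (\<lambda>om. of_bool (I om i) * of_bool (I om j)))"
  proof -
    have "Ew \<Omega> w (\<lambda>om. (real (Wc n I om))\<^sup>2) = Ew \<Omega> w (\<lambda>om. \<Sum>i<n. \<Sum>j<n. of_bool (I om i) * of_bool (I om j))"
      by (rule Ew_cong) (simp only: W_sum power2_eq_square sum_product)
    thus ?thesis by (simp only: Ew_sum)
  qed
  have l2: "(\<Sum>i<n. pi i)\<^sup>2 = (\<Sum>i<n. \<Sum>j<n. pi i * pi j)"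
    by (simp add: power2_eq_square sum_product)
  have "Ew \<Omega> w (\<lambda>om. (real (Wc n I om))\<^sup>2) - (\<Sum>i<n. pi i)\<^sup>2 = (\<Sum>i<n. \<Sum>j<n. C i j)"
    unfolding sq l2 C_def by (simp add: sum_subtractf)
  also have "\<dots> = (\<Sum>i<n. C i i + (\<Sum>j\<in>{..<n} - {i}. C i j))"
    by (intro sum.cong refl) (simp add: sum.remove)
  also have "\<dots> = (\<Sum>i<n. pi i - (pi i)\<^sup>2) + (\<Sum>i<n. \<Sum>j\<in>{..<n} - {i}. C i j)"
  proof -
    have "C i i = pi i - (pi i)\<^sup>2" for i
    proof -
      have "Ew \<Omega> w (\<lambda>om. of_bool (I om i) * of_bool (I om i)) = pi i"
        unfolding pi_def by (rule Ew_cong) simp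
      thus ?thesis unfolding C_def by (simp add: power2_eq_square)
    qed
    thus ?thesis by (simp add: sum.distrib)
  qed
  finally show ?thesis unfolding pi_def C_def .
qed

lemma exp_Ew:
  fixes f :: "'a \<Rightarrow> real"
  assumes "finite (set_pmf M)"
  shows "measure_pmf.expectation M f = Ew (set_pmf M) (pmf M) f"
  unfolding Ew_def by (subst integral_measure_pmf_real[OF assms]) (auto simp: mult.commute)

lemma prob_Ew:
  assumes "finite (set_pmf M)"
  shows "measure_pmf.prob M S = Ew (set_pmf M) (pmf M) (\<lambda>om. of_bool (om \<in> S))"
proof -
  have "measure_pmf.prob M S = measure_pmf.expectation M (indicator S)" by simp
  also have "\<dots> = Ew (set_pmf M) (pmf M) (\<lambda>om. of_bool (om \<in> S))"
    unfolding exp_Ew[OF assms] by (intro Ew_cong) (simp add: indicator_def)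
  finally show ?thesis .
qed



theorem mainTheorem5:
  fixes n :: nat and p t :: real
  assumes "n \<ge> 2"
    and "p = 0 \<or> (1/3 \<le> p \<and> p < 1)"
  defines "\<pi> \<equiv> (\<lambda>i. measure_pmf.prob (tournament_pmf n p) {\<omega>. Ind n p t \<omega> i = 1})"
    and "lam \<equiv> measure_pmf.expectation (tournament_pmf n p) (\<lambda>\<omega>. real (W n p t \<omega>))"
    and "VarW \<equiv> measure_pmf.variance (tournament_pmf n p) (\<lambda>\<omega>. real (W n p t \<omega>))"
    and "Cov \<equiv> (\<lambda>i j. measure_pmf.expectation (tournament_pmf n p) (\<lambda>\<omega>. Ind n p t \<omega> i * Ind n p t \<omega> j)
                     - measure_pmf.expectation (tournament_pmf n p) (\<lambda>\<omega>. Ind n p t \<omega> i)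
                       * measure_pmf.expectation (tournament_pmf n p) (\<lambda>\<omega>. Ind n p t \<omega> j))"
  shows "lam = (\<Sum>i<n. \<pi> i)
    \<and> dTV_nat (map_pmf (W n p t) (tournament_pmf n p)) (poisson_mass lam)
        \<le> (1 - exp (- lam)) / lam * (lam - VarW)
    \<and> (1 - exp (- lam)) / lam * (lam - VarW)
        = (1 - exp (- lam)) / lam *
          ((\<Sum>i<n. (\<pi> i)\<^sup>2) - (\<Sum>i<n. \<Sum>j\<in>{..<n} - {i}. Cov i j))"
proof -
  define M where "M = tournament_pmf n p"
  define \<Omega> where "\<Omega> = set_pmf M"
  define I where "I = Ip n p t"
  have finM: "finite (set_pmf M)" unfolding M_def by (rule tour_finite)
  have wnn: "\<And>om. om \<in> \<Omega> \<Longrightarrow> pmf M om \<ge> 0" by simp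
  have wsum: "sum (pmf M) \<Omega> = 1" unfolding \<Omega>_def by (rule sum_pmf_eq_1[OF finM]) simp
  have EE: "measure_pmf.expectation M f = Ew \<Omega> (pmf M) f" for f :: "_ \<Rightarrow> real"
    unfolding \<Omega>_def by (rule exp_Ew[OF finM])
  have Wd: "W n p t om = Wc n I om" for om by (simp add: W_def Wc_def I_def Ip_def)
  have Indd: "Ind n p t om i = of_bool (I om i)" for om i by (simp add: Ind_def I_def Ip_def)
  have pid: "\<pi> i = Ew \<Omega> (pmf M) (\<lambda>om. of_bool (I om i))" for i
  proof -
    have "\<pi> i = Ew \<Omega> (pmf M) (\<lambda>om. of_bool (om \<in> {om. Ind n p t om i = 1}))"
      unfolding \<pi>_def M_def[symmetric] \<Omega>_def by (rule prob_Ew[OF finM])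
    also have "\<dots> = Ew \<Omega> (pmf M) (\<lambda>om. of_bool (I om i))"
      by (rule Ew_cong) (simp add: Indd)
    finally show ?thesis .
  qed
  have lamd: "lam = Ew \<Omega> (pmf M) (\<lambda>om. real (Wc n I om))"
    unfolding lam_def M_def[symmetric] EE Wd ..
  have Vd: "VarW = Ew \<Omega> (pmf M) (\<lambda>om. (real (Wc n I om))\<^sup>2) - lam\<^sup>2"
  proof -
    have "VarW = Ew \<Omega> (pmf M) (\<lambda>om. (real (Wc n I om) - lam)\<^sup>2)"
      unfolding VarW_def M_def[symmetric] EE Wd lamd[symmetric] ..
    also have "\<dots> = Ew \<Omega> (pmf M) (\<lambda>om. (real (Wc n I om))\<^sup>2 - (2 * lam) * real (Wc n I om) + lam\<^sup>2)"
      by (rule Ew_cong) (simp add: power2_eq_square algebra_simps)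
    also have "\<dots> = Ew \<Omega> (pmf M) (\<lambda>om. (real (Wc n I om))\<^sup>2) - lam\<^sup>2"
      unfolding Ew_add Ew_diff Ew_cmult Ew_const[OF wsum] lamd[symmetric]
      by (simp add: power2_eq_square)
    finally show ?thesis .
  qed
  have Covd: "Cov i j = Ew \<Omega> (pmf M) (\<lambda>om. of_bool (I om i) * of_bool (I om j))
      - Ew \<Omega> (pmf M) (\<lambda>om. of_bool (I om i)) * Ew \<Omega> (pmf M) (\<lambda>om. of_bool (I om j))" for i j
    unfolding Cov_def M_def[symmetric] EE Indd ..
  have NR: "Ew \<Omega> (pmf M) (\<lambda>om. of_bool (I om i) * of_bool (k < Uc n I i om))
      \<le> Ew \<Omega> (pmf M) (\<lambda>om. of_bool (I om i)) * Ew \<Omega> (pmf M) (\<lambda>om. of_bool (k < Uc n I i om))"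
    if "i < n" for i k
  proof -
    have "p \<le> 1" using assms(2) by auto
    from NR_tour[OF this that, of t k] show ?thesis unfolding M_def[symmetric] EE I_def .
  qed
  have conj1: "lam = (\<Sum>i<n. \<pi> i)"
    unfolding lamd pid W_sum Ew_sum ..
  have dtv: "dTV_nat (map_pmf (W n p t) (tournament_pmf n p)) (poisson_mass lam)
      = (1/2) * (\<Sum>k. \<bar>Ew \<Omega> (pmf M) (\<lambda>om. of_bool (Wc n I om = k)) - poisson_mass lam k\<bar>)"
  proof -
    have "pmf (map_pmf (W n p t) M) k = Ew \<Omega> (pmf M) (\<lambda>om. of_bool (Wc n I om = k))" for k
    proof -
      have "pmf (map_pmf (W n p t) M) k = measure_pmf.prob M (W n p t -` {k})" by (rule pmf_map)
      also have "\<dots> = Ew \<Omega> (pmf M) (\<lambda>om. of_bool (om \<in> W n p t -` {k}))"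
        unfolding \<Omega>_def by (rule prob_Ew[OF finM])
      also have "\<dots> = Ew \<Omega> (pmf M) (\<lambda>om. of_bool (Wc n I om = k))"
        by (rule Ew_cong) (simp add: Wd)
      finally show ?thesis .
    qed
    thus ?thesis unfolding dTV_nat_def M_def by simp
  qed
  have conj2: "dTV_nat (map_pmf (W n p t) (tournament_pmf n p)) (poisson_mass lam)
        \<le> (1 - exp (- lam)) / lam * (lam - VarW)"
    using stein_dTV[OF wnn wsum NR] unfolding lamd[symmetric] dtv Vd .
  have conj3: "lam - VarW = (\<Sum>i<n. (\<pi> i)\<^sup>2) - (\<Sum>i<n. \<Sum>j\<in>{..<n} - {i}. Cov i j)"
  proof -
    have "VarW = (\<Sum>i<n. \<pi> i - (\<pi> i)\<^sup>2) + (\<Sum>i<n. \<Sum>j\<in>{..<n} - {i}. Cov i j)"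
      unfolding Vd conj1 pid Covd by (rule var_identity)
    thus ?thesis unfolding conj1 by (simp add: sum_subtractf)
  qed
  show ?thesis using conj1 conj2 conj3 by simp
qed


end
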